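(* Suppose that $G$ is a finite group, $x\in G$ has prime order, and $\mathrm{Sub}_G(x)$ is a proper core-free subgroup of $G$. Then for every proper subgroup $H$ of $G$ with $\mathrm{Sub}_G(x)\le H$, $x$ is quasi-semiregular in the action of $G$ on the right cosets $[G:H]$.
   Context: For $x\in G$, the subnormaliser is $\mathrm{Sub}_G(x)=\langle g\in G : \langle x\rangle \text{ is subnormal in } \langle x,g\rangle\rangle$. A subgroup is core-free if it contains no nontrivial normal subgroup of $G$. A permutation $g$ is quasi-semiregular if $\langle g\rangle$ has a unique fixed point and acts semiregularly (only the identity fixes a point) on the remaining points. *)

theory Defs
  imports "HOL-Algebra.Algebra"
begin

inductive subnormal_in :: "('a, 'b) monoid_scheme \<Rightarrow> 'a set \<Rightarrow> 'a set \<Rightarrow> bool"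
  for G where
  sn_refl: "subgroup K G \<Longrightarrow> subnormal_in G K K"
| sn_step: "subnormal_in G A L \<Longrightarrow> subgroup K G \<Longrightarrow> L \<subseteq> K
      \<Longrightarrow> normal L (G\<lparr>carrier := K\<rparr>) \<Longrightarrow> subnormal_in G A K"

definition subnormaliser :: "('a, 'b) monoid_scheme \<Rightarrow> 'a \<Rightarrow> 'a set" where
  "subnormaliser G x =
     generate G {g \<in> carrier G. subnormal_in G (generate G {x}) (generate G {x, g})}"

definition core_free :: "('a, 'b) monoid_scheme \<Rightarrow> 'a set \<Rightarrow> bool" where
  "core_free G S \<longleftrightarrow> (\<forall>N. normal N G \<and> N \<subseteq> S \<longrightarrow> N = {\<one>\<^bsub>G\<^esub>})"

definition quasi_semiregular_on_cosets :: "('a, 'b) monoid_scheme \<Rightarrow> 'a set \<Rightarrow> 'a \<Rightarrow> bool" where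
  "quasi_semiregular_on_cosets G H x \<longleftrightarrow>
     (\<exists>!C. C \<in> rcosets\<^bsub>G\<^esub> H \<and> (\<forall>y \<in> generate G {x}. C #>\<^bsub>G\<^esub> y = C)) \<and>
     (\<forall>C \<in> rcosets\<^bsub>G\<^esub> H. \<not> (\<forall>y \<in> generate G {x}. C #>\<^bsub>G\<^esub> y = C) \<longrightarrow>
        (\<forall>y \<in> generate G {x}. C #>\<^bsub>G\<^esub> y = C \<longrightarrow>
           (\<forall>D \<in> rcosets\<^bsub>G\<^esub> H. D #>\<^bsub>G\<^esub> y = D)))"

end

theory Submission
  imports Defs
begin

lemma fix_mod_p:
  fixes G (structure) and f :: "'a \<Rightarrow> 'c \<Rightarrow> 'c"
  assumes grp: "group G" and Q: "subgroup Q G" and cardQ: "card Q = p ^ k" and p: "Factorial_Ring.prime (p::nat)"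
    and fin: "finite \<Omega>"
    and cl: "\<And>q w. q \<in> Q \<Longrightarrow> w \<in> \<Omega> \<Longrightarrow> f q w \<in> \<Omega>"
    and one: "\<And>w. w \<in> \<Omega> \<Longrightarrow> f \<one> w = w"
    and comp: "\<And>q1 q2 w. q1 \<in> Q \<Longrightarrow> q2 \<in> Q \<Longrightarrow> w \<in> \<Omega> \<Longrightarrow> f (q1 \<otimes> q2) w = f q2 (f q1 w)"
  shows "card {w \<in> \<Omega>. \<forall>q\<in>Q. f q w = w} mod p = card \<Omega> mod p"
proof -
  interpret group G by (rule grp)
  define H where "H = G\<lparr>carrier := Q\<rparr>"
  have gH: "group H" unfolding H_def by (rule subgroup.subgroup_is_group[OF Q grp])
  have cH: "carrier H = Q" unfolding H_def by simp
  have mH: "\<And>a b. a \<otimes>\<^bsub>H\<^esub> b = a \<otimes> b" unfolding H_def by simp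
  have invQ: "\<And>q. q \<in> Q \<Longrightarrow> inv q \<in> Q" by (rule subgroup.m_inv_closed[OF Q])
  have QG: "\<And>q. q \<in> Q \<Longrightarrow> q \<in> carrier G" by (rule subgroup.mem_carrier[OF Q])
  define \<phi> where "\<phi> q = (\<lambda>w\<in>\<Omega>. f (inv q) w)" for q
  have inv1: "\<And>q w. q \<in> Q \<Longrightarrow> w \<in> \<Omega> \<Longrightarrow> f q (f (inv q) w) = w"
  proof -
    fix q w assume q: "q \<in> Q" and w: "w \<in> \<Omega>"
    have "f q (f (inv q) w) = f (inv q \<otimes> q) w" using comp[OF invQ[OF q] q w] by simp
    also have "\<dots> = w" using q QG one[OF w] by simp
    finally show "f q (f (inv q) w) = w" .
  qed
  have inv2: "\<And>q w. q \<in> Q \<Longrightarrow> w \<in> \<Omega> \<Longrightarrow> f (inv q) (f q w) = w"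
    using inv1 invQ QG by (metis inv_inv)
  have phiB: "\<phi> q \<in> Bij \<Omega>" if q: "q \<in> Q" for q
  proof -
    have "bij_betw (\<phi> q) \<Omega> \<Omega>"
      by (rule bij_betwI[where g="\<lambda>w. f q w"]) (auto simp: \<phi>_def q cl invQ inv1 inv2)
    then show ?thesis unfolding Bij_def \<phi>_def by auto
  qed
  have act: "group_action H \<Omega> \<phi>"
    unfolding group_action_def group_hom_def group_hom_axioms_def
  proof (intro conjI)
    show "group H" by (rule gH)
    show "group (BijGroup \<Omega>)" by (rule group_BijGroup)
    show "\<phi> \<in> hom H (BijGroup \<Omega>)"
    proof (rule homI)
      fix q assume "q \<in> carrier H" then show "\<phi> q \<in> carrier (BijGroup \<Omega>)"
        using phiB cH by (simp add: BijGroup_def)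
    next
      fix a b assume a: "a \<in> carrier H" and b: "b \<in> carrier H"
      have aQ: "a \<in> Q" and bQ: "b \<in> Q" using a b cH by auto
      have "\<phi> (a \<otimes> b) = compose \<Omega> (\<phi> a) (\<phi> b)"
      proof (rule ext)
        fix w show "\<phi> (a \<otimes> b) w = compose \<Omega> (\<phi> a) (\<phi> b) w"
        proof (cases "w \<in> \<Omega>")
          case True
          have "inv (a \<otimes> b) = inv b \<otimes> inv a" using aQ bQ QG by (simp add: inv_mult_group)
          then show ?thesis using True aQ bQ
            by (simp add: \<phi>_def compose_def comp invQ cl)
        next
          case False then show ?thesis by (simp add: \<phi>_def compose_def)
        qed
      qed
      then show "\<phi> (a \<otimes>\<^bsub>H\<^esub> b) = \<phi> a \<otimes>\<^bsub>BijGroup \<Omega>\<^esub> \<phi> b"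
        using phiB aQ bQ by (simp add: mH BijGroup_def)
    qed
  qed
  have orbit_eq: "orbit H \<phi> w = {\<phi> g w | g. g \<in> Q}" for w
    unfolding orbit_def cH by simp
  define F where "F = {w \<in> \<Omega>. \<forall>q\<in>Q. f q w = w}"
  have oneQ: "\<one> \<in> Q" by (rule subgroup.one_closed[OF Q])
  have w_in_orb: "w \<in> orbit H \<phi> w" if "w \<in> \<Omega>" for w
  proof -
    have "\<phi> \<one> w = w" using that by (simp add: \<phi>_def one)
    then show ?thesis using orbit_eq oneQ by force
  qed
  have orb_sub: "orbit H \<phi> w \<subseteq> \<Omega>" if "w \<in> \<Omega>" for w
    using that by (auto simp: orbit_eq \<phi>_def cl invQ)
  have fin_orb: "finite (orbit H \<phi> w)" if "w \<in> \<Omega>" for w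
    using orb_sub[OF that] fin finite_subset by blast
  have orb_card: "\<exists>i. card (orbit H \<phi> w) = p ^ i" if w: "w \<in> \<Omega>" for w
  proof -
    have "card (orbit H \<phi> w) * card (stabilizer H \<phi> w) = order H"
      using group_action.orbit_stabilizer_theorem[OF act w] .
    then have "card (orbit H \<phi> w) dvd p ^ k" unfolding order_def cH cardQ by (metis dvd_triv_left)
    then show ?thesis using divides_primepow_nat[OF p] by blast
  qed
  have fixed_iff: "card (orbit H \<phi> w) = 1 \<longleftrightarrow> w \<in> F" if w: "w \<in> \<Omega>" for w
  proof
    assume c: "card (orbit H \<phi> w) = 1"
    then have o: "orbit H \<phi> w = {w}" using w_in_orb[OF w] by (metis card_1_singletonE singletonD)
    show "w \<in> F" unfolding F_def
    proof (intro CollectI conjI ballI w)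
      fix q assume q: "q \<in> Q"
      have "\<phi> (inv q) w \<in> orbit H \<phi> w" using orbit_eq invQ[OF q] by blast
      then have "\<phi> (inv q) w = w" using o by simp
      then show "f q w = w" using w q QG by (simp add: \<phi>_def)
    qed
  next
    assume "w \<in> F"
    then have "orbit H \<phi> w = {w}" using w_in_orb[OF w]
      by (auto simp: orbit_eq F_def \<phi>_def invQ)
    then show "card (orbit H \<phi> w) = 1" by simp
  qed
  have sum1: "(\<Sum>Ob\<in>orbits H \<Omega> \<phi>. card Ob) = card \<Omega>"
    using group_action.disjoint_sum[OF act fin, of "\<lambda>_. 1::nat"] by simp
  have modO: "card Ob mod p = (if card Ob = 1 then 1 else 0)" if Oo: "Ob \<in> orbits H \<Omega> \<phi>" for Ob
  proof -
    obtain w where w: "w \<in> \<Omega>" and Ob: "Ob = orbit H \<phi> w" using Oo unfolding orbits_def by blast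
    obtain i where i: "card Ob = p ^ i" using orb_card[OF w] Ob by blast
    have p1: "p > 1" using p prime_gt_1_nat by blast
    show ?thesis
    proof (cases i)
      case 0 then show ?thesis using i p1 by simp
    next
      case (Suc j) then show ?thesis using i p1 by simp
    qed
  qed
  have finOs: "finite (orbits H \<Omega> \<phi>)" unfolding orbits_def using fin by simp
  have "card \<Omega> mod p = (\<Sum>Ob\<in>orbits H \<Omega> \<phi>. card Ob mod p) mod p"
    using sum1 by (simp add: mod_sum_eq)
  also have "\<dots> = (\<Sum>Ob\<in>orbits H \<Omega> \<phi>. (if card Ob = 1 then 1 else 0)) mod p"
    by (rule arg_cong[where f="\<lambda>x. x mod p"], rule sum.cong[OF refl], rule modO)
  also have "(\<Sum>Ob\<in>orbits H \<Omega> \<phi>. (if card Ob = 1 then 1 else 0)) = card {Ob \<in> orbits H \<Omega> \<phi>. card Ob = 1}"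
    using finOs by (simp add: sum.If_cases Int_def conj_commute)
  also have "card {Ob \<in> orbits H \<Omega> \<phi>. card Ob = 1} = card F"
  proof -
    have "bij_betw (\<lambda>w. {w}) F {Ob \<in> orbits H \<Omega> \<phi>. card Ob = 1}"
    proof (rule bij_betwI[where g="\<lambda>Ob. the_elem Ob"])
      show "(\<lambda>w. {w}) \<in> F \<rightarrow> {Ob \<in> orbits H \<Omega> \<phi>. card Ob = 1}"
      proof
        fix w assume wF: "w \<in> F"
        then have w: "w \<in> \<Omega>" unfolding F_def by simp
        have "card (orbit H \<phi> w) = 1" using fixed_iff[OF w] wF by simp
        then have "orbit H \<phi> w = {w}" using w_in_orb[OF w] by (metis card_1_singletonE singletonD)
        then show "{w} \<in> {Ob \<in> orbits H \<Omega> \<phi>. card Ob = 1}" unfolding orbits_def using w by force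
      qed
      show "the_elem \<in> {Ob \<in> orbits H \<Omega> \<phi>. card Ob = 1} \<rightarrow> F"
      proof
        fix Ob assume "Ob \<in> {Ob \<in> orbits H \<Omega> \<phi>. card Ob = 1}"
        then obtain w where w: "w \<in> \<Omega>" and Ob: "Ob = orbit H \<phi> w" and c: "card Ob = 1"
          unfolding orbits_def by blast
        then have "Ob = {w}" using w_in_orb[OF w] by (metis card_1_singletonE singletonD)
        then show "the_elem Ob \<in> F" using fixed_iff[OF w] Ob c by simp
      qed
      show "\<And>w. w \<in> F \<Longrightarrow> the_elem {w} = w" by simp
      show "\<And>Ob. Ob \<in> {Ob \<in> orbits H \<Omega> \<phi>. card Ob = 1} \<Longrightarrow> {the_elem Ob} = Ob"
        by (metis (mono_tags, lifting) card_1_singletonE mem_Collect_eq the_elem_eq)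
    qed
    then show ?thesis by (metis bij_betw_same_card)
  qed
  finally show ?thesis unfolding F_def by simp
qed

definition cj :: "('a, 'b) monoid_scheme \<Rightarrow> 'a \<Rightarrow> 'a set \<Rightarrow> 'a set" where
  "cj G g A = (\<lambda>a. g \<otimes>\<^bsub>G\<^esub> a \<otimes>\<^bsub>G\<^esub> inv\<^bsub>G\<^esub> g) ` A"

definition nrm :: "('a, 'b) monoid_scheme \<Rightarrow> 'a set \<Rightarrow> 'a set" where
  "nrm G A = {g \<in> carrier G. (\<forall>a\<in>A. g \<otimes>\<^bsub>G\<^esub> a \<otimes>\<^bsub>G\<^esub> inv\<^bsub>G\<^esub> g \<in> A) \<and>
                              (\<forall>a\<in>A. inv\<^bsub>G\<^esub> g \<otimes>\<^bsub>G\<^esub> a \<otimes>\<^bsub>G\<^esub> g \<in> A)}"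

lemma sn_trans:
  assumes "subnormal_in G B C" shows "subnormal_in G A B \<Longrightarrow> subnormal_in G A C"
  using assms
proof (induction rule: subnormal_in.induct)
  case (sn_refl K) then show ?case by simp
next
  case (sn_step A' L K) then show ?case by (auto intro: subnormal_in.sn_step)
qed

context group begin

lemma cancel1 [simp]: "g \<in> carrier G \<Longrightarrow> a \<in> carrier G \<Longrightarrow> inv g \<otimes> (g \<otimes> a) = a"
  by (simp add: m_assoc [symmetric])
lemma cancel2 [simp]: "g \<in> carrier G \<Longrightarrow> a \<in> carrier G \<Longrightarrow> g \<otimes> (inv g \<otimes> a) = a"
  by (simp add: m_assoc [symmetric])

lemma card_sub_dvd:
  assumes fin: "finite (carrier G)" and A: "subgroup A G" and B: "subgroup B G" and AB: "A \<subseteq> B"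
  shows "card A dvd card B"
proof -
  have gB: "group (G\<lparr>carrier := B\<rparr>)" by (rule subgroup.subgroup_is_group[OF B is_group])
  have sA: "subgroup A (G\<lparr>carrier := B\<rparr>)" by (rule subgroup_incl[OF A B AB])
  have fB: "finite B" using fin B subgroup.subset finite_subset by blast
  have "card (rcosets\<^bsub>G\<lparr>carrier := B\<rparr>\<^esub> A) * card A = order (G\<lparr>carrier := B\<rparr>)"
    using group.lagrange[OF gB] fB sA by simp
  then show ?thesis unfolding order_def by (metis dvd_triv_right partial_object.select_convs(1) partial_object.surjective partial_object.update_convs(1))
qed

lemma pgroup_sub:
  assumes fin: "finite (carrier G)" and p: "Factorial_Ring.prime (p::nat)"
    and A: "subgroup A G" and B: "subgroup B G" and AB: "A \<subseteq> B" and cB: "card B = p ^ k"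
  shows "\<exists>i. card A = p ^ i"
  using card_sub_dvd[OF fin A B AB] cB divides_primepow_nat[OF p] by auto

lemma cj_iff:
  assumes g: "g \<in> carrier G" and A: "A \<subseteq> carrier G" and y: "y \<in> carrier G"
  shows "y \<in> cj G g A \<longleftrightarrow> inv g \<otimes> y \<otimes> g \<in> A"
proof
  assume "y \<in> cj G g A"
  then obtain a where a: "a \<in> A" and ya: "y = g \<otimes> a \<otimes> inv g" unfolding cj_def by blast
  have aG: "a \<in> carrier G" using a A by blast
  have "inv g \<otimes> y \<otimes> g = a" using g aG ya by (simp add: m_assoc)
  then show "inv g \<otimes> y \<otimes> g \<in> A" using a by simp
next
  assume h: "inv g \<otimes> y \<otimes> g \<in> A"
  have "g \<otimes> (inv g \<otimes> y \<otimes> g) \<otimes> inv g = y" using g y by (simp add: m_assoc)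
  then show "y \<in> cj G g A" unfolding cj_def using h by (metis image_eqI)
qed

lemma cj_sub: "g \<in> carrier G \<Longrightarrow> A \<subseteq> carrier G \<Longrightarrow> cj G g A \<subseteq> carrier G"
  unfolding cj_def by auto

lemma cj_subgroup:
  assumes g: "g \<in> carrier G" and A: "subgroup A G"
  shows "subgroup (cj G g A) G"
proof (rule subgroupI)
  have AG: "A \<subseteq> carrier G" using A subgroup.subset by blast
  show "cj G g A \<subseteq> carrier G" using cj_sub[OF g AG] .
  show "cj G g A \<noteq> {}" unfolding cj_def using subgroup.one_closed[OF A] by blast
  fix a assume a: "a \<in> cj G g A"
  have aG: "a \<in> carrier G" using a cj_sub[OF g AG] by blast
  have "inv g \<otimes> a \<otimes> g \<in> A" using cj_iff[OF g AG aG] a by simp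
  then have "inv (inv g \<otimes> a \<otimes> g) \<in> A" using subgroup.m_inv_closed[OF A] by blast
  moreover have "inv (inv g \<otimes> a \<otimes> g) = inv g \<otimes> inv a \<otimes> g" using g aG
    by (simp add: inv_mult_group m_assoc)
  ultimately show "inv a \<in> cj G g A" using cj_iff[OF g AG] aG by simp
next
  have AG: "A \<subseteq> carrier G" using A subgroup.subset by blast
  fix a b assume a: "a \<in> cj G g A" and b: "b \<in> cj G g A"
  have aG: "a \<in> carrier G" using a cj_sub[OF g AG] by blast
  have bG: "b \<in> carrier G" using b cj_sub[OF g AG] by blast
  have "inv g \<otimes> a \<otimes> g \<in> A" "inv g \<otimes> b \<otimes> g \<in> A" using cj_iff[OF g AG] aG bG a b by auto
  then have "(inv g \<otimes> a \<otimes> g) \<otimes> (inv g \<otimes> b \<otimes> g) \<in> A" using subgroup.m_closed[OF A] by blast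
  moreover have "(inv g \<otimes> a \<otimes> g) \<otimes> (inv g \<otimes> b \<otimes> g) = inv g \<otimes> (a \<otimes> b) \<otimes> g"
    using g aG bG by (simp add: m_assoc)
  ultimately show "a \<otimes> b \<in> cj G g A" using cj_iff[OF g AG] aG bG by simp
qed

lemma cj_card:
  assumes g: "g \<in> carrier G" and A: "A \<subseteq> carrier G"
  shows "card (cj G g A) = card A"
proof -
  have "inj_on (\<lambda>a. g \<otimes> a \<otimes> inv g) A"
  proof (rule inj_onI)
    fix a b assume a: "a \<in> A" and b: "b \<in> A" and e: "g \<otimes> a \<otimes> inv g = g \<otimes> b \<otimes> inv g"
    have aG: "a \<in> carrier G" and bG: "b \<in> carrier G" using a b A by auto
    have "inv g \<otimes> (g \<otimes> a \<otimes> inv g) \<otimes> g = inv g \<otimes> (g \<otimes> b \<otimes> inv g) \<otimes> g" using e by simp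
    then show "a = b" using g aG bG by (simp add: m_assoc)
  qed
  then show ?thesis unfolding cj_def by (simp add: card_image)
qed

lemma cj_cj:
  assumes g: "g \<in> carrier G" and h: "h \<in> carrier G" and A: "A \<subseteq> carrier G"
  shows "cj G g (cj G h A) = cj G (g \<otimes> h) A"
proof -
  have "\<And>a. a \<in> A \<Longrightarrow> g \<otimes> (h \<otimes> a \<otimes> inv h) \<otimes> inv g = (g \<otimes> h) \<otimes> a \<otimes> inv (g \<otimes> h)"
    using g h A by (auto simp add: m_assoc inv_mult_group)
  then show ?thesis unfolding cj_def image_image by (auto intro: image_cong)
qed

lemma nrm_subgroup:
  assumes A: "subgroup A G"
  shows "subgroup (nrm G A) G"
proof (rule subgroupI)
  have AG: "A \<subseteq> carrier G" using A subgroup.subset by blast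
  show "nrm G A \<subseteq> carrier G" unfolding nrm_def by blast
  have "\<one> \<in> nrm G A" unfolding nrm_def using AG by auto
  then show "nrm G A \<noteq> {}" by blast
  fix a assume a: "a \<in> nrm G A"
  then show "inv a \<in> nrm G A" unfolding nrm_def by auto
next
  have AG: "A \<subseteq> carrier G" using A subgroup.subset by blast
  fix a b assume a: "a \<in> nrm G A" and b: "b \<in> nrm G A"
  have aG: "a \<in> carrier G" and bG: "b \<in> carrier G" using a b unfolding nrm_def by auto
  show "a \<otimes> b \<in> nrm G A" unfolding nrm_def
  proof (intro CollectI conjI ballI)
    show "a \<otimes> b \<in> carrier G" using aG bG by simp
    fix c assume c: "c \<in> A"
    have cG: "c \<in> carrier G" using c AG by auto
    have "b \<otimes> c \<otimes> inv b \<in> A" using b c unfolding nrm_def by auto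
    then have "a \<otimes> (b \<otimes> c \<otimes> inv b) \<otimes> inv a \<in> A" using a unfolding nrm_def by auto
    moreover have "a \<otimes> (b \<otimes> c \<otimes> inv b) \<otimes> inv a = a \<otimes> b \<otimes> c \<otimes> inv (a \<otimes> b)"
      using aG bG cG by (simp add: m_assoc inv_mult_group)
    ultimately show "a \<otimes> b \<otimes> c \<otimes> inv (a \<otimes> b) \<in> A" by simp
    have "inv a \<otimes> c \<otimes> a \<in> A" using a c unfolding nrm_def by auto
    then have "inv b \<otimes> (inv a \<otimes> c \<otimes> a) \<otimes> b \<in> A" using b unfolding nrm_def by auto
    moreover have "inv b \<otimes> (inv a \<otimes> c \<otimes> a) \<otimes> b = inv (a \<otimes> b) \<otimes> c \<otimes> (a \<otimes> b)"
      using aG bG cG by (simp add: m_assoc inv_mult_group)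
    ultimately show "inv (a \<otimes> b) \<otimes> c \<otimes> (a \<otimes> b) \<in> A" by simp
  qed
qed

lemma sub_nrm:
  assumes A: "subgroup A G" shows "A \<subseteq> nrm G A"
proof
  fix a assume a: "a \<in> A"
  have AG: "A \<subseteq> carrier G" using A subgroup.subset by blast
  show "a \<in> nrm G A" unfolding nrm_def
    using a AG subgroup.m_closed[OF A] subgroup.m_inv_closed[OF A] by auto
qed

lemma normal_nrm:
  assumes A: "subgroup A G" and K: "subgroup K G" and AK: "A \<subseteq> K" and Kn: "K \<subseteq> nrm G A"
  shows "normal A (G\<lparr>carrier := K\<rparr>)"
proof -
  have gK: "group (G\<lparr>carrier := K\<rparr>)" by (rule subgroup.subgroup_is_group[OF K is_group])
  have sA: "subgroup A (G\<lparr>carrier := K\<rparr>)" by (rule subgroup_incl[OF A K AK])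
  show ?thesis
  proof (rule group.normal_invI[OF gK sA])
    fix x h assume x: "x \<in> carrier (G\<lparr>carrier := K\<rparr>)" and h: "h \<in> A"
    have xK: "x \<in> K" using x by simp
    have "x \<otimes> h \<otimes> inv x \<in> A" using Kn xK h unfolding nrm_def by auto
    then show "x \<otimes>\<^bsub>G\<lparr>carrier := K\<rparr>\<^esub> h \<otimes>\<^bsub>G\<lparr>carrier := K\<rparr>\<^esub> inv\<^bsub>G\<lparr>carrier := K\<rparr>\<^esub> x \<in> A"
      using m_inv_consistent[OF K xK] by simp
  qed
qed

lemma nrm_of_conj_sub:
  assumes A: "subgroup A G" and fA: "finite A" and g: "g \<in> carrier G"
    and h: "\<And>a. a \<in> A \<Longrightarrow> g \<otimes> a \<otimes> inv g \<in> A"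
  shows "g \<in> nrm G A"
proof -
  have AG: "A \<subseteq> carrier G" using A subgroup.subset by blast
  have sub: "cj G g A \<subseteq> A" unfolding cj_def using h by auto
  have eq: "cj G g A = A" using card_subset_eq[OF fA sub] cj_card[OF g AG] by simp
  have "inv g \<otimes> a \<otimes> g \<in> A" if a: "a \<in> A" for a
    using cj_iff[OF g AG] a AG eq by auto
  then show ?thesis unfolding nrm_def using g h by auto
qed

lemma rcos_eq_iff:
  assumes H: "subgroup H G" and a: "a \<in> carrier G" and b: "b \<in> carrier G"
  shows "H #> a = H #> b \<longleftrightarrow> a \<otimes> inv b \<in> H"
proof
  assume "H #> a = H #> b"
  then have "a \<in> H #> b" using rcos_self[OF a H] by simp
  then show "a \<otimes> inv b \<in> H" using subgroup.rcos_module[OF H is_group b a] by simp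
next
  assume "a \<otimes> inv b \<in> H"
  then have "a \<in> H #> b" using subgroup.rcos_module[OF H is_group b a] by simp
  then show "H #> a = H #> b" using repr_independence[OF _ b H] by simp
qed

lemma rcos_fix_iff:
  assumes H: "subgroup H G" and g: "g \<in> carrier G" and z: "z \<in> carrier G"
  shows "(H #> g) #> z = H #> g \<longleftrightarrow> g \<otimes> z \<otimes> inv g \<in> H"
proof -
  have HG: "H \<subseteq> carrier G" using H subgroup.subset by blast
  have "(H #> g) #> z = H #> (g \<otimes> z)" using coset_mult_assoc[OF HG g z] .
  then show ?thesis using rcos_eq_iff[OF H _ g] g z by simp
qed

end

context group begin

lemma sylow_embed:
  assumes fin: "finite (carrier G)" and p: "Factorial_Ring.prime (p::nat)"
    and K: "subgroup K G" and P: "subgroup P G" and PK: "P \<subseteq> K"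
    and Q: "subgroup Q G" and QK: "Q \<subseteq> K" and cQ: "card Q = p ^ k"
    and nd: "\<not> p dvd card {P #> g | g. g \<in> K}"
  shows "\<exists>g\<in>K. \<forall>q\<in>Q. g \<otimes> q \<otimes> inv g \<in> P"
proof -
  define \<Omega> where "\<Omega> = {P #> g | g. g \<in> K}"
  have KG: "K \<subseteq> carrier G" using K subgroup.subset by blast
  have PG: "P \<subseteq> carrier G" using P subgroup.subset by blast
  have QG: "Q \<subseteq> carrier G" using Q subgroup.subset by blast
  have fK: "finite K" using fin KG finite_subset by blast
  have finO: "finite \<Omega>" unfolding \<Omega>_def using fK by simp
  have OG: "C \<subseteq> carrier G" if "C \<in> \<Omega>" for C
    using that KG PG r_coset_subset_G unfolding \<Omega>_def by blast
  have eq: "card {C \<in> \<Omega>. \<forall>q\<in>Q. C #> q = C} mod p = card \<Omega> mod p"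
  proof (rule fix_mod_p[OF is_group Q cQ p finO])
    fix q C assume q: "q \<in> Q" and C: "C \<in> \<Omega>"
    then obtain g where g: "g \<in> K" and Cg: "C = P #> g" unfolding \<Omega>_def by blast
    have "C #> q = P #> (g \<otimes> q)" using Cg coset_mult_assoc[OF PG] g q KG QG by blast
    moreover have "g \<otimes> q \<in> K" using g q QK subgroup.m_closed[OF K] by blast
    ultimately show "C #> q \<in> \<Omega>" unfolding \<Omega>_def by blast
  next
    fix C assume "C \<in> \<Omega>" then show "C #> \<one> = C" using OG by simp
  next
    fix q1 q2 C assume a: "q1 \<in> Q" "q2 \<in> Q" "C \<in> \<Omega>"
    have "C #> q1 #> q2 = C #> (q1 \<otimes> q2)" using coset_mult_assoc[OF OG[OF a(3)]] a QG by blast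
    then show "C #> (q1 \<otimes> q2) = C #> q1 #> q2" by simp
  qed
  have "card \<Omega> mod p \<noteq> 0" using nd unfolding \<Omega>_def by (simp add: dvd_eq_mod_eq_0)
  then have "card {C \<in> \<Omega>. \<forall>q\<in>Q. C #> q = C} \<noteq> 0" using eq by (intro notI) simp
  then have "{C \<in> \<Omega>. \<forall>q\<in>Q. C #> q = C} \<noteq> {}" by (intro notI) simp
  then obtain C where C: "C \<in> \<Omega>" and Cf: "\<forall>q\<in>Q. C #> q = C" by blast
  then obtain g where g: "g \<in> K" and Cg: "C = P #> g" unfolding \<Omega>_def by blast
  have gG: "g \<in> carrier G" using g KG by blast
  have "\<forall>q\<in>Q. g \<otimes> q \<otimes> inv g \<in> P"
  proof
    fix q assume q: "q \<in> Q"
    then have qG: "q \<in> carrier G" using QG by blast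
    show "g \<otimes> q \<otimes> inv g \<in> P" using rcos_fix_iff[OF P gG qG] Cf q Cg by simp
  qed
  then show ?thesis using g by blast
qed

lemma pgroup_subnormal:
  assumes fin: "finite (carrier G)" and p: "Factorial_Ring.prime (p::nat)"
    and Q: "subgroup Q G" and cQ: "card Q = p ^ k"
  shows "subgroup A G \<Longrightarrow> A \<subseteq> Q \<Longrightarrow> subnormal_in G A Q"
proof (induction "card Q - card A" arbitrary: A rule: less_induct)
  case less
  note A = less.prems(1) and AQ = less.prems(2)
  show ?case
  proof (cases "A = Q")
    case True then show ?thesis using Q subnormal_in.sn_refl by blast
  next
    case False
    have QG: "Q \<subseteq> carrier G" using Q subgroup.subset by blast
    have AG: "A \<subseteq> carrier G" using A subgroup.subset by blast
    have fQ: "finite Q" using fin QG finite_subset by blast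
    have fA: "finite A" using fQ AQ finite_subset by blast
    obtain j where cA: "card A = p ^ j" using pgroup_sub[OF fin p A Q AQ cQ] by blast
    have lt: "card A < card Q" using False AQ fQ psubset_card_mono by blast
    have p1: "p > 1" using p prime_gt_1_nat by blast
    have jk: "j < k" using lt cA cQ p1 by (simp add: power_strict_increasing_iff)
    define \<Omega> where "\<Omega> = {A #> q | q. q \<in> Q}"
    have finO: "finite \<Omega>" unfolding \<Omega>_def using fQ by simp
    have OG: "C \<subseteq> carrier G" if "C \<in> \<Omega>" for C
      using that QG AG r_coset_subset_G unfolding \<Omega>_def by blast
    have gQ: "group (G\<lparr>carrier := Q\<rparr>)" by (rule subgroup.subgroup_is_group[OF Q is_group])
    have sA: "subgroup A (G\<lparr>carrier := Q\<rparr>)" by (rule subgroup_incl[OF A Q AQ])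
    have "card (rcosets\<^bsub>G\<lparr>carrier := Q\<rparr>\<^esub> A) * card A = order (G\<lparr>carrier := Q\<rparr>)"
      using group.lagrange[OF gQ] fQ sA by simp
    moreover have "rcosets\<^bsub>G\<lparr>carrier := Q\<rparr>\<^esub> A = \<Omega>"
      unfolding \<Omega>_def RCOSETS_def r_coset_def by auto
    ultimately have "card \<Omega> * p ^ j = p ^ k" using cA cQ unfolding order_def by simp
    moreover have "p ^ k = p ^ (k - j) * p ^ j" using jk by (simp add: power_add[symmetric])
    ultimately have "card \<Omega> * p ^ j = p ^ (k - j) * p ^ j" by simp
    then have "card \<Omega> = p ^ (k - j)" using p1 by simp
    then have pdO: "p dvd card \<Omega>" using jk by simp
    have "card {C \<in> \<Omega>. \<forall>a\<in>A. C #> a = C} mod p = card \<Omega> mod p"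
    proof (rule fix_mod_p[OF is_group A cA p finO])
      fix q C assume q: "q \<in> A" and C: "C \<in> \<Omega>"
      then obtain g where g: "g \<in> Q" and Cg: "C = A #> g" unfolding \<Omega>_def by blast
      have "C #> q = A #> (g \<otimes> q)" using Cg coset_mult_assoc[OF AG] g q QG AG by blast
      moreover have "g \<otimes> q \<in> Q" using g q AQ subgroup.m_closed[OF Q] by blast
      ultimately show "C #> q \<in> \<Omega>" unfolding \<Omega>_def by blast
    next
      fix C assume "C \<in> \<Omega>" then show "C #> \<one> = C" using OG by simp
    next
      fix q1 q2 C assume a: "q1 \<in> A" "q2 \<in> A" "C \<in> \<Omega>"
      have "C #> q1 #> q2 = C #> (q1 \<otimes> q2)" using coset_mult_assoc[OF OG[OF a(3)]] a AG by blast
      then show "C #> (q1 \<otimes> q2) = C #> q1 #> q2" by simp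
    qed
    then have F0: "p dvd card {C \<in> \<Omega>. \<forall>a\<in>A. C #> a = C}" using pdO
      by (simp add: dvd_eq_mod_eq_0)
    define F where "F = {C \<in> \<Omega>. \<forall>a\<in>A. C #> a = C}"
    have AF: "A \<in> F"
    proof -
      have "A #> \<one> = A" using AG by simp
      then have "A \<in> \<Omega>" unfolding \<Omega>_def using subgroup.one_closed[OF Q] by force
      moreover have "\<forall>a\<in>A. A #> a = A" using coset_join2[OF _ A] AG by blast
      ultimately show ?thesis unfolding F_def by blast
    qed
    have fF: "finite F" unfolding F_def using finO by simp
    have "card F \<ge> 2"
    proof -
      have "card F \<noteq> 0" using AF fF by auto
      then have "card F \<ge> p" using F0 unfolding F_def[symmetric] by (simp add: dvd_imp_le)
      then show ?thesis using p1 by simp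
    qed
    then obtain C where CF: "C \<in> F" and CA: "C \<noteq> A"
      by (metis AF card_1_singletonE card_le_Suc0_iff_eq fF nat_less_le not_less_eq_eq numeral_2_eq_2 singletonD)
    then obtain q where q: "q \<in> Q" and Cq: "C = A #> q" unfolding F_def \<Omega>_def by blast
    have qG: "q \<in> carrier G" using q QG by blast
    have qA: "q \<notin> A" using CA Cq coset_join2[OF qG A] by blast
    have "\<forall>a\<in>A. q \<otimes> a \<otimes> inv q \<in> A"
      using CF Cq rcos_fix_iff[OF A qG] AG unfolding F_def by auto
    then have qN: "q \<in> nrm G A" using nrm_of_conj_sub[OF A fA qG] by blast
    define N where "N = nrm G A \<inter> Q"
    have N: "subgroup N G" unfolding N_def using subgroup_Int[OF nrm_subgroup[OF A] Q] .
    have AN: "A \<subseteq> N" unfolding N_def using sub_nrm[OF A] AQ by blast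
    have NQ: "N \<subseteq> Q" unfolding N_def by blast
    have fN: "finite N" using fQ NQ finite_subset by blast
    have "A \<subset> N" using AN qA qN q unfolding N_def by blast
    then have "card A < card N" using fN psubset_card_mono by blast
    moreover have "card N \<le> card Q" using NQ fQ card_mono by blast
    ultimately have "card Q - card N < card Q - card A" by linarith
    then have snNQ: "subnormal_in G N Q" using less.hyps N NQ by blast
    have "normal A (G\<lparr>carrier := N\<rparr>)" using normal_nrm[OF A N AN] unfolding N_def by blast
    then have "subnormal_in G A N"
      using subnormal_in.sn_step[OF subnormal_in.sn_refl[OF A] N AN] by blast
    then show ?thesis using sn_trans[OF snNQ] by blast
  qed
qed

end

context group begin

lemma idx_nd:
  assumes fin: "finite (carrier G)" and p: "Factorial_Ring.prime (p::nat)"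
    and ord: "order G = p ^ a * m" and nm: "\<not> p dvd m"
    and K: "subgroup K G" and P: "subgroup P G" and PK: "P \<subseteq> K" and cP: "card P = p ^ a"
  shows "\<not> p dvd card {P #> g | g. g \<in> K}"
proof
  assume pd: "p dvd card {P #> g | g. g \<in> K}"
  have KG: "K \<subseteq> carrier G" using K subgroup.subset by blast
  have fK: "finite K" using fin KG finite_subset by blast
  have gK: "group (G\<lparr>carrier := K\<rparr>)" by (rule subgroup.subgroup_is_group[OF K is_group])
  have sP: "subgroup P (G\<lparr>carrier := K\<rparr>)" by (rule subgroup_incl[OF P K PK])
  have "card (rcosets\<^bsub>G\<lparr>carrier := K\<rparr>\<^esub> P) * card P = order (G\<lparr>carrier := K\<rparr>)"
    using group.lagrange[OF gK] fK sP by simp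
  moreover have "rcosets\<^bsub>G\<lparr>carrier := K\<rparr>\<^esub> P = {P #> g | g. g \<in> K}"
    unfolding RCOSETS_def r_coset_def by auto
  ultimately have e: "card {P #> g | g. g \<in> K} * p ^ a = card K" using cP unfolding order_def by simp
  have "card K dvd order G" using card_sub_dvd[OF fin K subgroup_self KG] unfolding order_def .
  then have "card {P #> g | g. g \<in> K} * p ^ a dvd m * p ^ a" using e ord by (simp add: mult.commute)
  then have "card {P #> g | g. g \<in> K} dvd m" using p prime_gt_0_nat by (simp add: dvd_mult_cancel_right)
  then show False using pd nm dvd_trans by blast
qed

lemma key_unique:
  assumes fin: "finite (carrier G)" and p: "Factorial_Ring.prime (p::nat)"
    and ord: "order G = p ^ a * m" and nm: "\<not> p dvd m"
    and P0: "subgroup P0 G" and cP0: "card P0 = p ^ a" and xP0: "x \<in> P0"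
    and ox: "group.ord G x = p"
    and H: "subgroup H G"
    and hR: "\<And>R. subgroup R G \<Longrightarrow> card R = p ^ a \<Longrightarrow> x \<in> R \<Longrightarrow> R \<subseteq> H"
    and hN: "nrm G P0 \<subseteq> H"
    and g: "g \<in> carrier G" and gx: "g \<otimes> x \<otimes> inv g \<in> H"
  shows "g \<in> H"
proof -
  have HG: "H \<subseteq> carrier G" using H subgroup.subset by blast
  have P0G: "P0 \<subseteq> carrier G" using P0 subgroup.subset by blast
  have x: "x \<in> carrier G" using xP0 P0G by blast
  have ig: "inv g \<in> carrier G" using g by simp
  define U where "U = cj G (inv g) H"
  have U: "subgroup U G" unfolding U_def using cj_subgroup[OF ig H] .
  have UG: "U \<subseteq> carrier G" using U subgroup.subset by blast
  have xU: "x \<in> U" unfolding U_def using cj_iff[OF ig HG x] gx g by simp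
  have P0H: "P0 \<subseteq> H" using hR[OF P0 cP0 xP0] .
  define P' where "P' = cj G (inv g) P0"
  have P': "subgroup P' G" unfolding P'_def using cj_subgroup[OF ig P0] .
  have P'U: "P' \<subseteq> U" unfolding P'_def U_def cj_def using P0H by blast
  have cP': "card P' = p ^ a" unfolding P'_def using cj_card[OF ig P0G] cP0 by simp
  define Xg where "Xg = generate G {x}"
  have Xg: "subgroup Xg G" unfolding Xg_def using generate_is_subgroup x by simp
  have xX: "x \<in> Xg" unfolding Xg_def by (simp add: generate.incl)
  have XU: "Xg \<subseteq> U" unfolding Xg_def using generate_subgroup_incl[OF _ U] xU by simp
  have cX: "card Xg = p ^ 1" unfolding Xg_def using generate_pow_card[OF x] ox by simp
  obtain u where u: "u \<in> U" and uX: "\<forall>q\<in>Xg. u \<otimes> q \<otimes> inv u \<in> P'"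
    using sylow_embed[OF fin p U P' P'U Xg XU cX idx_nd[OF fin p ord nm U P' P'U cP']] by blast
  have uG: "u \<in> carrier G" using u UG by blast
  have iu: "inv u \<in> carrier G" using uG by simp
  have P'G: "P' \<subseteq> carrier G" using P' subgroup.subset by blast
  define R where "R = cj G (inv u) P'"
  have R: "subgroup R G" unfolding R_def using cj_subgroup[OF iu P'] .
  have cR: "card R = p ^ a" unfolding R_def using cj_card[OF iu P'G] cP' by simp
  have xR: "x \<in> R" unfolding R_def using cj_iff[OF iu P'G x] uX xX uG by simp
  have RH: "R \<subseteq> H" using hR[OF R cR xR] .
  have RG: "R \<subseteq> carrier G" using R subgroup.subset by blast
  obtain h where h: "h \<in> H" and hR': "\<forall>r\<in>R. h \<otimes> r \<otimes> inv h \<in> P0"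
    using sylow_embed[OF fin p H P0 P0H R RH cR idx_nd[OF fin p ord nm H P0 P0H cP0]] by blast
  have hG: "h \<in> carrier G" using h HG by blast
  have sub: "cj G h R \<subseteq> P0" unfolding cj_def using hR' by blast
  have fP0: "finite P0" using fin P0G finite_subset by blast
  have eq: "cj G h R = P0" using card_subset_eq[OF fP0 sub] cj_card[OF hG RG] cR cP0 by simp
  define n where "n = h \<otimes> inv u \<otimes> inv g"
  have nG: "n \<in> carrier G" unfolding n_def using hG iu ig by simp
  have c1: "cj G (inv u) (cj G (inv g) P0) = cj G (inv u \<otimes> inv g) P0" by (rule cj_cj[OF iu ig P0G])
  have c2: "cj G h (cj G (inv u \<otimes> inv g) P0) = cj G (h \<otimes> (inv u \<otimes> inv g)) P0"
    by (rule cj_cj) (simp_all add: hG iu ig P0G)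
  have "cj G h R = cj G n P0"
    unfolding R_def P'_def n_def using c1 c2 hG iu ig by (simp add: m_assoc)
  then have eqn: "cj G n P0 = P0" using eq by simp
  have "n \<in> nrm G P0"
  proof (rule nrm_of_conj_sub[OF P0 fP0 nG])
    fix a assume "a \<in> P0"
    then have "n \<otimes> a \<otimes> inv n \<in> cj G n P0" unfolding cj_def by blast
    then show "n \<otimes> a \<otimes> inv n \<in> P0" using eqn by simp
  qed
  then have nH: "n \<in> H" using hN by blast
  have "inv h \<otimes> n \<in> H" by (rule subgroup.m_closed[OF H subgroup.m_inv_closed[OF H h] nH])
  moreover have "inv h \<otimes> n = inv u \<otimes> inv g" unfolding n_def using hG iu ig by (simp add: m_assoc)
  ultimately have "inv u \<otimes> inv g \<in> H" by simp
  then have "inv (inv u \<otimes> inv g) \<in> H" by (rule subgroup.m_inv_closed[OF H])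
  moreover have "inv (inv u \<otimes> inv g) = g \<otimes> u" using uG g by (simp add: inv_mult_group)
  ultimately have guH: "g \<otimes> u \<in> H" by simp
  have "g \<otimes> u \<otimes> inv g \<in> H" using cj_iff[OF ig HG uG] u g unfolding U_def by (simp add: inv_inv)
  then have "inv (g \<otimes> u \<otimes> inv g) \<otimes> (g \<otimes> u) \<in> H"
    by (rule subgroup.m_closed[OF H subgroup.m_inv_closed[OF H] guH])
  moreover have "inv (g \<otimes> u \<otimes> inv g) \<otimes> (g \<otimes> u) = g"
    using uG g by (simp add: inv_mult_group m_assoc)
  ultimately show ?thesis by simp
qed

end

theorem corollary3p4:
  fixes G (structure) and x :: 'a
  assumes "group G" and "finite (carrier G)" and "x \<in> carrier G"
    and "Factorial_Ring.prime (group.ord G x)"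
    and "subnormaliser G x \<noteq> carrier G"
    and "core_free G (subnormaliser G x)"
  shows "\<forall>H. subgroup H G \<and> H \<noteq> carrier G \<and> subnormaliser G x \<subseteq> H
           \<longrightarrow> quasi_semiregular_on_cosets G H x"
proof -
  interpret group G by (rule assms(1))
  have fin: "finite (carrier G)" by (rule assms(2))
  have x: "x \<in> carrier G" by (rule assms(3))
  define p where "p = group.ord G x"
  have p: "Factorial_Ring.prime p" unfolding p_def by (rule assms(4))
  have ox: "group.ord G x = p" unfolding p_def ..
  define a where "a = multiplicity p (order G)"
  have o0: "order G \<noteq> 0" using fin order_gt_0_iff_finite by simp
  have nu: "\<not> is_unit p" using p not_prime_unit by blast
  obtain m where ord: "order G = p ^ a * m" and nm: "\<not> p dvd m"
    using multiplicity_decompose'[OF o0 nu] unfolding a_def by blast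
  obtain P1 where P1: "subgroup P1 G" and cP1: "card P1 = p ^ a"
    using sylow_thm[OF p assms(1) ord fin] by blast
  have P1G: "P1 \<subseteq> carrier G" using P1 subgroup.subset by blast
  define Xg where "Xg = generate G {x}"
  have Xg: "subgroup Xg G" unfolding Xg_def using generate_is_subgroup x by simp
  have XgG: "Xg \<subseteq> carrier G" using Xg subgroup.subset by blast
  have xX: "x \<in> Xg" unfolding Xg_def by (simp add: generate.incl)
  have cX: "card Xg = p ^ 1" unfolding Xg_def using generate_pow_card[OF x] ox by simp
  have fX: "finite Xg" using fin XgG finite_subset by blast
  obtain c where c: "c \<in> carrier G" and cX': "\<forall>q\<in>Xg. c \<otimes> q \<otimes> inv c \<in> P1"
    using sylow_embed[OF fin p subgroup_self P1 P1G Xg XgG cX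
        idx_nd[OF fin p ord nm subgroup_self P1 P1G cP1]] by blast
  have ic: "inv c \<in> carrier G" using c by simp
  define P0 where "P0 = cj G (inv c) P1"
  have P0: "subgroup P0 G" unfolding P0_def using cj_subgroup[OF ic P1] .
  have P0G: "P0 \<subseteq> carrier G" using P0 subgroup.subset by blast
  have cP0: "card P0 = p ^ a" unfolding P0_def using cj_card[OF ic P1G] cP1 by simp
  have xP0: "x \<in> P0" unfolding P0_def using cj_iff[OF ic P1G x] cX' xX c by (simp add: inv_inv)
  define S where "S = subnormaliser G x"
  have S_eq: "S = generate G {g \<in> carrier G. subnormal_in G Xg (generate G {x, g})}"
    unfolding S_def subnormaliser_def Xg_def ..
  have Ssub: "subgroup S G" unfolding S_eq by (rule generate_is_subgroup) blast
  have inS: "g \<in> S" if "g \<in> carrier G" "subnormal_in G Xg (generate G {x, g})" for g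
    unfolding S_eq using that by (simp add: generate.incl)
  have hRS: "R \<subseteq> S" if R: "subgroup R G" and cR: "card R = p ^ i" and xR: "x \<in> R" for R i
  proof
    fix r assume r: "r \<in> R"
    have RG: "R \<subseteq> carrier G" using R subgroup.subset by blast
    have rG: "r \<in> carrier G" using r RG by blast
    define K where "K = generate G {x, r}"
    have K: "subgroup K G" unfolding K_def using generate_is_subgroup x rG by simp
    have KR: "K \<subseteq> R" unfolding K_def using generate_subgroup_incl[OF _ R] xR r by simp
    obtain j where cK: "card K = p ^ j" using pgroup_sub[OF fin p K R KR cR] by blast
    have XK: "Xg \<subseteq> K" unfolding Xg_def K_def by (rule mono_generate) blast
    have "subnormal_in G Xg K" using pgroup_subnormal[OF fin p K cK Xg XK] .
    then show "r \<in> S" using inS[OF rG] unfolding K_def by blast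
  qed
  have hNS: "nrm G P0 \<subseteq> S"
  proof
    fix n assume n: "n \<in> nrm G P0"
    have nG: "n \<in> carrier G" using n unfolding nrm_def by blast
    define K where "K = generate G {x, n}"
    have K: "subgroup K G" unfolding K_def using generate_is_subgroup x nG by simp
    have NP: "subgroup (nrm G P0) G" by (rule nrm_subgroup[OF P0])
    have xN: "x \<in> nrm G P0" using sub_nrm[OF P0] xP0 by blast
    have KN: "K \<subseteq> nrm G P0" unfolding K_def using generate_subgroup_incl[OF _ NP] xN n by simp
    define B where "B = P0 \<inter> K"
    have B: "subgroup B G" unfolding B_def by (rule subgroup_Int[OF P0 K])
    have BK: "B \<subseteq> K" unfolding B_def by blast
    have BP: "B \<subseteq> P0" unfolding B_def by blast
    have XK: "Xg \<subseteq> K" unfolding Xg_def K_def by (rule mono_generate) blast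
    have XP: "Xg \<subseteq> P0" unfolding Xg_def using generate_subgroup_incl[OF _ P0] xP0 by simp
    have XB: "Xg \<subseteq> B" unfolding B_def using XK XP by blast
    obtain j where cB: "card B = p ^ j" using pgroup_sub[OF fin p B P0 BP cP0] by blast
    have snB: "subnormal_in G Xg B" using pgroup_subnormal[OF fin p B cB Xg XB] .
    have KnB: "K \<subseteq> nrm G B"
    proof
      fix k assume k: "k \<in> K"
      have kG: "k \<in> carrier G" using k K subgroup.subset by blast
      have kN: "k \<in> nrm G P0" using k KN by blast
      show "k \<in> nrm G B" unfolding nrm_def
      proof (intro CollectI conjI ballI kG)
        fix b assume b: "b \<in> B"
        have bK: "b \<in> K" and bP: "b \<in> P0" using b unfolding B_def by auto
        have "k \<otimes> b \<otimes> inv k \<in> P0" using kN bP unfolding nrm_def by blast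
        moreover have "k \<otimes> b \<otimes> inv k \<in> K"
          using k bK subgroup.m_closed[OF K] subgroup.m_inv_closed[OF K] by blast
        ultimately show "k \<otimes> b \<otimes> inv k \<in> B" unfolding B_def by blast
        have "inv k \<otimes> b \<otimes> k \<in> P0" using kN bP unfolding nrm_def by blast
        moreover have "inv k \<otimes> b \<otimes> k \<in> K"
          using k bK subgroup.m_closed[OF K] subgroup.m_inv_closed[OF K] by blast
        ultimately show "inv k \<otimes> b \<otimes> k \<in> B" unfolding B_def by blast
      qed
    qed
    have "normal B (G\<lparr>carrier := K\<rparr>)" by (rule normal_nrm[OF B K BK KnB])
    then have "subnormal_in G Xg K" using subnormal_in.sn_step[OF snB K BK] by blast
    then show "n \<in> S" using inS[OF nG] unfolding K_def by blast
  qed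
  have XS: "Xg \<subseteq> S" using hRS[OF Xg cX xX] .
  show ?thesis
  proof (intro allI impI)
    fix H assume "subgroup H G \<and> H \<noteq> carrier G \<and> subnormaliser G x \<subseteq> H"
    then have H: "subgroup H G" and SH: "S \<subseteq> H" unfolding S_def by auto
    have HG: "H \<subseteq> carrier G" using H subgroup.subset by blast
    have uniq: "g \<in> H" if g: "g \<in> carrier G" and gx: "g \<otimes> x \<otimes> inv g \<in> H" for g
    proof (rule key_unique[OF fin p ord nm P0 cP0 xP0 ox H _ _ g gx])
      fix R assume "subgroup R G" "card R = p ^ a" "x \<in> R"
      then show "R \<subseteq> H" using hRS SH by blast
    next
      show "nrm G P0 \<subseteq> H" using hNS SH by blast
    qed
    have XH: "Xg \<subseteq> H" using XS SH by blast
    have fixed_iff: "(H #> g) #> z = H #> g \<longleftrightarrow> z \<in> cj G (inv g) H"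
      if g: "g \<in> carrier G" and z: "z \<in> carrier G" for g z
    proof -
      have ig: "inv g \<in> carrier G" using g by simp
      show ?thesis using rcos_fix_iff[OF H g z] cj_iff[OF ig HG z] g by (simp add: inv_inv)
    qed
    show "quasi_semiregular_on_cosets G H x"
      unfolding quasi_semiregular_on_cosets_def Xg_def[symmetric]
    proof (intro conjI)
      show "\<exists>!C. C \<in> rcosets H \<and> (\<forall>y\<in>Xg. C #> y = C)"
      proof (rule ex1I[of _ H])
        have "H #> \<one> \<in> rcosets H" by (rule rcosetsI[OF HG one_closed])
        then have "H \<in> rcosets H" using HG by simp
        moreover have "\<forall>y\<in>Xg. H #> y = H" using XH XgG coset_join2[OF _ H] by blast
        ultimately show "H \<in> rcosets H \<and> (\<forall>y\<in>Xg. H #> y = H)" by blast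
      next
        fix C assume C: "C \<in> rcosets H \<and> (\<forall>y\<in>Xg. C #> y = C)"
        then obtain g where g: "g \<in> carrier G" and Cg: "C = H #> g"
          unfolding RCOSETS_def by blast
        have "(H #> g) #> x = H #> g" using C Cg xX by blast
        then have "g \<otimes> x \<otimes> inv g \<in> H" using rcos_fix_iff[OF H g x] by simp
        then have "g \<in> H" by (rule uniq[OF g])
        then show "C = H" using Cg coset_join2[OF g H] by simp
      qed
    next
      show "\<forall>C\<in>rcosets H. \<not> (\<forall>y\<in>Xg. C #> y = C) \<longrightarrow>
              (\<forall>y\<in>Xg. C #> y = C \<longrightarrow> (\<forall>D\<in>rcosets H. D #> y = D))"
      proof (intro ballI impI)
        fix C y D
        assume C: "C \<in> rcosets H" and nf: "\<not> (\<forall>y\<in>Xg. C #> y = C)" and y: "y \<in> Xg"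
          and Cy: "C #> y = C" and D: "D \<in> rcosets H"
        obtain g where g: "g \<in> carrier G" and Cg: "C = H #> g"
          using C unfolding RCOSETS_def by blast
        have ig: "inv g \<in> carrier G" using g by simp
        have yG: "y \<in> carrier G" using y XgG by blast
        have y1: "y = \<one>"
        proof (rule ccontr)
          assume yn: "y \<noteq> \<one>"
          define St where "St = cj G (inv g) H"
          have St: "subgroup St G" unfolding St_def by (rule cj_subgroup[OF ig H])
          have ySt: "y \<in> St" unfolding St_def using fixed_iff[OF g yG] Cy Cg by simp
          define Yg where "Yg = generate G {y}"
          have Yg: "subgroup Yg G" unfolding Yg_def using generate_is_subgroup yG by simp
          have YX: "Yg \<subseteq> Xg" unfolding Yg_def using generate_subgroup_incl[OF _ Xg] y by simp
          have YSt: "Yg \<subseteq> St" unfolding Yg_def using generate_subgroup_incl[OF _ St] ySt by simp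
          have cY: "card Yg = group.ord G y" unfolding Yg_def using generate_pow_card[OF yG] by simp
          have "card Yg dvd p ^ 1" using card_sub_dvd[OF fin Yg Xg YX] cX by simp
          then obtain i where i: "i \<le> 1" and ci: "card Yg = p ^ i"
            using divides_primepow_nat[OF p] by blast
          have "card Yg \<noteq> 1" using cY ord_eq_1[OF yG] yn by simp
          then have "card Yg = card Xg" using i ci cX by (cases i) auto
          then have "Yg = Xg" using card_subset_eq[OF fX YX] by simp
          then have "Xg \<subseteq> St" using YSt by simp
          then have "\<forall>z\<in>Xg. C #> z = C" using fixed_iff[OF g] XgG Cg unfolding St_def by blast
          then show False using nf by blast
        qed
        obtain g' where g': "g' \<in> carrier G" and Dg: "D = H #> g'"
          using D unfolding RCOSETS_def by blast
        have "D \<subseteq> carrier G" using Dg HG g' r_coset_subset_G by blast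
        then show "D #> y = D" using y1 by simp
      qed
    qed
  qed
qed


end
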